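(* Let $v$ be a non-constant analytic function on $\mathbb{T}=\mathbb{R}/\mathbb{Z}$ whose shortest (positive) period is $1$. Then there exist $s\in\mathbb{N}$ and $c>0$ such that $$\max_{0\le l\le s}\left|\partial_\theta^l\big(v(\theta+\phi)-v(\theta)\big)\right|\ge c\|\phi\|_{\mathbb{T}}\quad\forall\theta,\phi\in\mathbb{T}.$$
   Context: $\|\phi\|_{\mathbb{T}}=\inf_{l\in\mathbb{Z}}|l-\phi|$. *)

theory Defs
  imports "HOL-Analysis.Analysis"
begin

definition real_analytic :: "(real \<Rightarrow> real) \<Rightarrow> bool" where
  "real_analytic f \<longleftrightarrow>
     (\<forall>x. \<exists>r>0. \<exists>a::nat \<Rightarrow> real. \<forall>y. \<bar>y - x\<bar> < r \<longrightarrow> (\<lambda>n. a n * (y - x) ^ n) sums f y)"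

definition torus_norm :: "real \<Rightarrow> real" where
  "torus_norm \<phi> = (INF l::int. \<bar>of_int l - \<phi>\<bar>)"

end

theory Submission
  imports Defs
begin

definition ps_ok :: "real \<Rightarrow> real \<Rightarrow> (nat \<Rightarrow> real) \<Rightarrow> (real \<Rightarrow> real) \<Rightarrow> bool" where
  "ps_ok x r a f \<longleftrightarrow> (\<forall>y. \<bar>y - x\<bar> < r \<longrightarrow> (\<lambda>n. a n * (y - x) ^ n) sums f y)"

lemma ps_step:
  assumes h: "ps_ok x r a f" and y: "\<bar>y - x\<bar> < r"
  shows "(f has_real_derivative (\<Sum>n. diffs a n * (y - x) ^ n)) (at y)"
    and "(\<lambda>n. diffs a n * (y - x) ^ n) sums deriv f y"
proof -
  define K where "K = (\<bar>y - x\<bar> + r) / 2"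
  have K1: "\<bar>y - x\<bar> < K" and K2: "K < r" using y by (auto simp: K_def)
  have "\<bar>(x + K) - x\<bar> < r" using K1 K2 by auto
  then have "(\<lambda>n. a n * ((x + K) - x) ^ n) sums f (x + K)" using h unfolding ps_ok_def by blast
  then have sK: "summable (\<lambda>n. a n * K ^ n)" by (simp add: sums_iff)
  have d: "DERIV (\<lambda>z. \<Sum>n. a n * z^n) (y - x) :> (\<Sum>n. diffs a n * (y - x)^n)"
    by (rule termdiffs_strong[OF sK]) (use K1 in auto)
  have d2: "DERIV (\<lambda>t. \<Sum>n. a n * (t - x)^n) y :> (\<Sum>n. diffs a n * (y - x)^n)"
    using DERIV_shift[of "\<lambda>z. \<Sum>n. a n * z^n" _ "y" "-x"] d by simp
  show d3: "(f has_real_derivative (\<Sum>n. diffs a n * (y - x) ^ n)) (at y)"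
  proof (rule has_field_derivative_transform_within_open[OF d2, of "{t. \<bar>t - x\<bar> < r}"])
    show "open {t. \<bar>t - x\<bar> < r}"
      by (intro open_Collect_less continuous_intros)
    show "y \<in> {t. \<bar>t - x\<bar> < r}" using y by simp
    fix t assume "t \<in> {t. \<bar>t - x\<bar> < r}"
    then show "(\<Sum>n. a n * (t - x)^n) = f t" using h by (auto simp: ps_ok_def sums_iff)
  qed
  have "summable (\<lambda>n. diffs a n * (y - x) ^ n)"
  proof (rule termdiff_converges[of _ r])
    show "norm (y - x) < r" using y by simp
    fix z :: real assume "norm z < r"
    then have "\<bar>(x + z) - x\<bar> < r" by simp
    then have "(\<lambda>n. a n * ((x + z) - x) ^ n) sums f (x + z)" using h unfolding ps_ok_def by blast
    then show "summable (\<lambda>n. a n * z ^ n)" by (simp add: sums_iff)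
  qed
  then show "(\<lambda>n. diffs a n * (y - x) ^ n) sums deriv f y"
    using DERIV_imp_deriv[OF d3] by (simp add: summable_sums)
qed

lemma ps_ok_deriv: "ps_ok x r a f \<Longrightarrow> ps_ok x r (diffs a) (deriv f)"
  using ps_step(2) unfolding ps_ok_def by blast

lemma ps_ok_derivs: "ps_ok x r a f \<Longrightarrow> ps_ok x r ((diffs ^^ k) a) ((deriv ^^ k) f)"
  by (induction k) (auto intro: ps_ok_deriv)

lemma diffs_pow: "(diffs ^^ k) a n = (fact (n + k) / fact n) * (a (n + k) :: real)"
proof (induction k arbitrary: n)
  case 0 then show ?case by simp
next
  case (Suc k)
  have "(diffs ^^ Suc k) a n = of_nat (Suc n) * (diffs ^^ k) a (Suc n)"
    by (simp add: diffs_def)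
  also have "\<dots> = of_nat (Suc n) * (fact (Suc n + k) / fact (Suc n)) * a (Suc n + k)"
    using Suc by simp
  also have "\<dots> = (fact (n + Suc k) / fact n) * a (n + Suc k)"
    by (simp add: field_simps del: of_nat_Suc)
  finally show ?case .
qed

lemma analytic_deriv: "real_analytic f \<Longrightarrow> real_analytic (deriv f)"
  unfolding real_analytic_def using ps_ok_deriv unfolding ps_ok_def by blast

lemma analytic_DERIV: "real_analytic f \<Longrightarrow> (f has_real_derivative deriv f y) (at y)"
proof -
  assume "real_analytic f"
  then obtain r a where r: "r > 0" and h: "ps_ok y r a f" unfolding real_analytic_def ps_ok_def by blast
  from ps_step[OF h] r show ?thesis by (metis DERIV_imp_deriv abs_zero diff_self)
qed

lemma analytic_derivs: "real_analytic f \<Longrightarrow> real_analytic ((deriv ^^ k) f)"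
  by (induction k) (auto intro: analytic_deriv)

lemma analytic_DERIVs: "real_analytic f \<Longrightarrow> ((deriv ^^ k) f has_real_derivative (deriv ^^ Suc k) f y) (at y)"
  using analytic_DERIV[OF analytic_derivs] by simp

lemma analytic_cont: "real_analytic f \<Longrightarrow> continuous_on UNIV ((deriv ^^ k) f)"
  by (meson DERIV_isCont analytic_DERIVs continuous_at_imp_continuous_on)

lemma identity:
  assumes f: "real_analytic f" and z: "\<And>k. (deriv ^^ k) f x0 = 0"
  shows "f y = 0"
proof -
  define S where "S = {x. \<forall>k. (deriv ^^ k) f x = 0}"
  have "closed S"
  proof -
    have "S = (\<Inter>k. {x. (deriv ^^ k) f x = 0})" by (auto simp: S_def)
    moreover have "closed {x. (deriv ^^ k) f x = 0}" for k
      by (rule closed_Collect_eq) (auto intro: analytic_cont[OF f])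
    ultimately show ?thesis by auto
  qed
  moreover have "open S"
  proof (unfold open_dist, intro ballI)
    fix x assume xS: "x \<in> S"
    from f obtain r a where r: "r > 0" and h: "ps_ok x r a f" unfolding real_analytic_def ps_ok_def by blast
    have a0: "a k = 0" for k
    proof -
      have "(\<lambda>n. (diffs ^^ k) a n * (x - x) ^ n) sums (deriv ^^ k) f x"
      proof -
        have "\<bar>x - x\<bar> < r" using r by simp
        then show ?thesis using ps_ok_derivs[OF h, of k] unfolding ps_ok_def by blast
      qed
      then have "(\<lambda>n. (diffs ^^ k) a n * 0 ^ n) sums (deriv ^^ k) f x" by simp
      then have "(deriv ^^ k) f x = (diffs ^^ k) a 0" using powser_zero sums_unique by metis
      then show ?thesis using xS by (simp add: S_def diffs_pow)
    qed
    have "y' \<in> S" if "dist y' x < r" for y'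
    proof -
      have "(deriv ^^ k) f y' = 0" for k
      proof -
        have "(\<lambda>n. (diffs ^^ k) a n * (y' - x) ^ n) sums (deriv ^^ k) f y'"
          using ps_ok_derivs[OF h] that by (simp add: ps_ok_def dist_real_def)
        then show ?thesis by (simp add: diffs_pow a0 sums_iff)
      qed
      then show ?thesis by (simp add: S_def)
    qed
    then show "\<exists>e>0. \<forall>y'. dist y' x < e \<longrightarrow> y' \<in> S" using r by blast
  qed
  moreover have "x0 \<in> S" using z by (simp add: S_def)
  ultimately have "S = UNIV" using clopen by blast
  then have "y \<in> S" by simp
  then have "(deriv ^^ 0) f y = 0" unfolding S_def by blast
  then show ?thesis by simp
qed


lemma deriv_shift: "deriv (\<lambda>t. f (t + c)) x = deriv f (x + (c::real))"
  unfolding deriv_def using DERIV_shift[of f _ x c] by simp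

lemma derivs_shift: "(deriv ^^ k) (\<lambda>t. f (t + c)) = (\<lambda>t. (deriv ^^ k) f (t + (c::real)))"
  by (induction k) (auto simp: deriv_shift)

lemma analytic_shift: "real_analytic f \<Longrightarrow> real_analytic (\<lambda>t. f (t + c))"
  unfolding real_analytic_def
proof (intro allI)
  fix x assume h: "\<forall>x. \<exists>r>0. \<exists>a. \<forall>y. \<bar>y - x\<bar> < r \<longrightarrow> (\<lambda>n. a n * (y - x) ^ n) sums f y"
  then obtain r a where r: "r > 0" and ha: "\<forall>y. \<bar>y - (x + c)\<bar> < r \<longrightarrow> (\<lambda>n. a n * (y - (x + c)) ^ n) sums f y"
    by blast
  have "\<forall>y. \<bar>y - x\<bar> < r \<longrightarrow> (\<lambda>n. a n * (y - x) ^ n) sums f (y + c)"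
  proof (intro allI impI)
    fix y assume "\<bar>y - x\<bar> < r"
    then have "\<bar>(y + c) - (x + c)\<bar> < r" by simp
    then have "(\<lambda>n. a n * ((y + c) - (x + c)) ^ n) sums f (y + c)" using ha by blast
    then show "(\<lambda>n. a n * (y - x) ^ n) sums f (y + c)" by simp
  qed
  then show "\<exists>r>0. \<exists>a. \<forall>y. \<bar>y - x\<bar> < r \<longrightarrow> (\<lambda>n. a n * (y - x) ^ n) sums f (y + c)"
    using r by blast
qed

lemma analytic_diff: "real_analytic f \<Longrightarrow> real_analytic g \<Longrightarrow> real_analytic (\<lambda>t. f t - g t)"
  unfolding real_analytic_def
proof (intro allI)
  fix x
  assume "\<forall>x. \<exists>r>0. \<exists>a. \<forall>y. \<bar>y - x\<bar> < r \<longrightarrow> (\<lambda>n. a n * (y - x) ^ n) sums f y"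
    and "\<forall>x. \<exists>r>0. \<exists>a. \<forall>y. \<bar>y - x\<bar> < r \<longrightarrow> (\<lambda>n. a n * (y - x) ^ n) sums g y"
  then obtain r1 a r2 b where r1: "r1 > 0" and ha: "\<forall>y. \<bar>y - x\<bar> < r1 \<longrightarrow> (\<lambda>n. a n * (y - x) ^ n) sums f y"
    and r2: "r2 > 0" and hb: "\<forall>y. \<bar>y - x\<bar> < r2 \<longrightarrow> (\<lambda>n. b n * (y - x) ^ n) sums g y"
    by metis
  have "\<forall>y. \<bar>y - x\<bar> < min r1 r2 \<longrightarrow> (\<lambda>n. (a n - b n) * (y - x) ^ n) sums (f y - g y)"
    using ha hb by (auto simp: left_diff_distrib intro: sums_diff)
  then show "\<exists>r>0. \<exists>a. \<forall>y. \<bar>y - x\<bar> < r \<longrightarrow> (\<lambda>n. a n * (y - x) ^ n) sums (f y - g y)"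
    using r1 r2 by (metis min_less_iff_conj)
qed

lemma derivs_diff:
  assumes "real_analytic v"
  shows "(deriv ^^ k) (\<lambda>t. v (t + p) - v t) = (\<lambda>t. (deriv ^^ k) v (t + p) - (deriv ^^ k) v t)"
proof (induction k)
  case 0 then show ?case by simp
next
  case (Suc k)
  have "deriv (\<lambda>t. (deriv ^^ k) v (t + p) - (deriv ^^ k) v t) x
        = (deriv ^^ Suc k) v (x + p) - (deriv ^^ Suc k) v x" for x
  proof (rule DERIV_imp_deriv, rule DERIV_diff)
    show "((\<lambda>t. (deriv ^^ k) v (t + p)) has_real_derivative (deriv ^^ Suc k) v (x + p)) (at x)"
      using analytic_DERIVs[OF assms, of k "x + p"] DERIV_shift by blast
    show "((deriv ^^ k) v has_real_derivative (deriv ^^ Suc k) v x) (at x)"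
      using analytic_DERIVs[OF assms] by blast
  qed
  then show ?case using Suc by auto
qed

lemma periodic_derivs:
  assumes "\<And>x. v (x + 1) = v x"
  shows "(deriv ^^ k) v (x + of_int m) = (deriv ^^ k) v (x :: real)"
proof -
  have e: "(\<lambda>t. v (t + 1)) = v" using assms by auto
  have p1: "(deriv ^^ k) v (y + 1) = (deriv ^^ k) v y" for y
    using derivs_shift[of k v 1] e by metis
  have pn: "(deriv ^^ k) v (y + of_nat n) = (deriv ^^ k) v y" for y n
  proof (induction n)
    case (Suc n)
    have "(deriv ^^ k) v (y + of_nat (Suc n)) = (deriv ^^ k) v ((y + of_nat n) + 1)"
      by (simp add: algebra_simps)
    also have "\<dots> = (deriv ^^ k) v y" using p1 Suc by simp
    finally show ?case .
  qed simp
  show ?thesis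
  proof (cases "m \<ge> 0")
    case True then show ?thesis using pn[of x "nat m"] by simp
  next
    case False
    then have "(deriv ^^ k) v ((x + of_int m) + of_nat (nat (-m))) = (deriv ^^ k) v (x + of_int m)"
      using pn by blast
    then show ?thesis using False by simp
  qed
qed

lemma torus_norm_le: "torus_norm p \<le> \<bar>of_int m - p\<bar>"
  unfolding torus_norm_def by (rule cINF_lower) (auto intro: bdd_belowI[of _ 0])

lemma mvt_sym:
  fixes f f' :: "real \<Rightarrow> real"
  assumes d: "\<And>y. (f has_real_derivative f' y) (at y)" and h: "h \<noteq> 0"
  shows "\<exists>\<xi>. \<bar>\<xi> - x\<bar> \<le> \<bar>h\<bar> \<and> f (x + h) - f x = h * f' \<xi>"
proof (cases "h > 0")
  case True
  from MVT2[of x "x + h" f f'] True d obtain z where "x < z" "z < x + h" "f (x + h) - f x = (x + h - x) * f' z"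
    by auto
  then show ?thesis by (intro exI[of _ z]) auto
next
  case False
  with h have hn: "h < 0" by simp
  from MVT2[of "x + h" x f f'] hn d obtain z where "x + h < z" "z < x" "f x - f (x + h) = (x - (x + h)) * f' z"
    by auto
  then show ?thesis by (intro exI[of _ z]) (auto simp: algebra_simps)
qed


theorem lemmaB1:
  fixes v :: "real \<Rightarrow> real"
  assumes analytic: "real_analytic v"
    and periodic: "\<And>x. v (x + 1) = v x"
    and minimal: "\<And>p. 0 < p \<Longrightarrow> p < 1 \<Longrightarrow> \<not> (\<forall>x. v (x + p) = v x)"
    and nonconst: "\<not> (\<exists>C. \<forall>x. v x = C)"
  shows "\<exists>s::nat. \<exists>c>0. \<forall>\<theta> \<phi>.
           Max ((\<lambda>l. \<bar>(deriv ^^ l) (\<lambda>t. v (t + \<phi>) - v t) \<theta>\<bar>) ` {0..s})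
             \<ge> c * torus_norm \<phi>"
proof (rule ccontr)
  assume neg: "\<not> ?thesis"
  define D where "D k = (deriv ^^ k) v" for k
  have Dder: "(D k has_real_derivative D (Suc k) y) (at y)" for k y
    unfolding D_def by (rule analytic_DERIVs[OF analytic])
  have Dcont: "isCont (D k) y" for k y using Dder DERIV_isCont by blast
  have Dper: "D k (x + of_int m) = D k x" for k x m
    unfolding D_def by (rule periodic_derivs[where v=v, OF periodic])
  have bad: "\<exists>\<theta> \<psi>. \<theta> \<in> {0..1} \<and> \<psi> \<in> {-1/2..1/2} \<and> \<psi> \<noteq> 0 \<and>
      (\<forall>l\<le>n. \<bar>D l (\<theta> + \<psi>) - D l \<theta>\<bar> \<le> \<bar>\<psi>\<bar> * inverse (real (Suc n)))" for n
  proof -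
    have cpos: "inverse (real (Suc n)) > 0" by simp
    from neg cpos obtain \<theta> \<phi> where
      lt: "Max ((\<lambda>l. \<bar>(deriv ^^ l) (\<lambda>t. v (t + \<phi>) - v t) \<theta>\<bar>) ` {0..n}) < inverse (real (Suc n)) * torus_norm \<phi>"
      using not_le by blast
    define M where "M = Max ((\<lambda>l. \<bar>(deriv ^^ l) (\<lambda>t. v (t + \<phi>) - v t) \<theta>\<bar>) ` {0..n})"
    have Mge: "\<bar>D l (\<theta> + \<phi>) - D l \<theta>\<bar> \<le> M" if "l \<le> n" for l
    proof -
      have "\<bar>(deriv ^^ l) (\<lambda>t. v (t + \<phi>) - v t) \<theta>\<bar> \<le> M"
        unfolding M_def by (rule Max_ge) (use that in auto)
      then show ?thesis by (simp add: derivs_diff[OF analytic] D_def)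
    qed
    have M0: "M \<ge> 0" using Mge[of 0] by simp
    define m where "m = round \<phi>"
    define \<psi> where "\<psi> = \<phi> - of_int m"
    define \<theta>' where "\<theta>' = \<theta> - of_int (floor \<theta>)"
    have tn: "torus_norm \<phi> \<le> \<bar>\<psi>\<bar>" using torus_norm_le[of \<phi> m] by (simp add: \<psi>_def abs_minus_commute)
    have Mlt: "M < inverse (real (Suc n)) * \<bar>\<psi>\<bar>"
      using lt tn cpos unfolding M_def[symmetric]
      by (meson less_le_trans mult_left_mono less_imp_le)
    have "\<psi> \<noteq> 0" using Mlt M0 by auto
    moreover have "\<psi> \<in> {-1/2..1/2}" using of_int_round_abs_le[of \<phi>] unfolding \<psi>_def m_def atLeastAtMost_iff by arith
    moreover have "\<theta>' \<in> {0..1}" unfolding \<theta>'_def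
      by (auto simp: algebra_simps) (smt (verit) real_of_int_floor_add_one_gt)
    moreover have "\<bar>D l (\<theta>' + \<psi>) - D l \<theta>'\<bar> \<le> \<bar>\<psi>\<bar> * inverse (real (Suc n))" if "l \<le> n" for l
    proof -
      have "D l (\<theta>' + \<psi>) = D l ((\<theta> + \<phi>) + of_int (- (floor \<theta> + m)))"
        by (simp add: \<theta>'_def \<psi>_def algebra_simps)
      also have "\<dots> = D l (\<theta> + \<phi>)" by (rule Dper)
      finally have e1: "D l (\<theta>' + \<psi>) = D l (\<theta> + \<phi>)" .
      have e2: "D l \<theta>' = D l \<theta>" using Dper[of l \<theta> "- floor \<theta>"] by (simp add: \<theta>'_def)
      show ?thesis using Mge[OF that] Mlt by (simp add: e1 e2 mult.commute)
    qed
    ultimately show ?thesis by blast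
  qed
  then obtain T P where TP: "\<And>n. T n \<in> {0..1} \<and> P n \<in> {-1/2..1/2} \<and> P n \<noteq> 0 \<and>
      (\<forall>l\<le>n. \<bar>D l (T n + P n) - D l (T n)\<bar> \<le> \<bar>P n\<bar> * inverse (real (Suc n)))"
    by metis
  have "compact ({0..1::real} \<times> {-1/2..1/2::real})" by (intro compact_Times) auto
  then have "seq_compact ({0..1::real} \<times> {-1/2..1/2::real})" by (rule compact_imp_seq_compact)
  moreover have "\<forall>n. (T n, P n) \<in> {0..1} \<times> {-1/2..1/2}" using TP by auto
  ultimately obtain lim r where lim: "lim \<in> {0..1::real} \<times> {-1/2..1/2::real}" and r: "strict_mono r"
    and conv: "((\<lambda>n. (T n, P n)) \<circ> r) \<longlonglongrightarrow> lim"
    by (rule seq_compactE)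
  define \<theta>s where "\<theta>s = fst lim"
  define \<psi>s where "\<psi>s = snd lim"
  have Tc: "(\<lambda>m. T (r m)) \<longlonglongrightarrow> \<theta>s"
    using tendsto_fst[OF conv] by (simp add: \<theta>s_def o_def)
  have Pc: "(\<lambda>m. P (r m)) \<longlonglongrightarrow> \<psi>s"
    using tendsto_snd[OF conv] by (simp add: \<psi>s_def o_def)
  have \<psi>s_rng: "\<psi>s \<in> {-1/2..1/2}" using lim by (auto simp: \<psi>s_def)
  have inv0: "(\<lambda>m. inverse (real (Suc m))) \<longlonglongrightarrow> 0"
    using LIMSEQ_inverse_real_of_nat by simp
  have bnd: "\<bar>D l (T (r m) + P (r m)) - D l (T (r m))\<bar> \<le> \<bar>P (r m)\<bar> * inverse (real (Suc m))"
    if "l \<le> m" for l m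
  proof -
    have rm: "m \<le> r m" using r by (rule seq_suble)
    have "\<bar>D l (T (r m) + P (r m)) - D l (T (r m))\<bar> \<le> \<bar>P (r m)\<bar> * inverse (real (Suc (r m)))"
      using TP[of "r m"] that rm by auto
    also have "\<dots> \<le> \<bar>P (r m)\<bar> * inverse (real (Suc m))"
      using rm by (intro mult_left_mono) (auto simp: field_simps)
    finally show ?thesis .
  qed
  have Pb: "\<bar>P n\<bar> \<le> 1" for n using TP[of n] by auto
  show False
  proof (cases "\<psi>s = 0")
    case False
    have z: "D l (\<theta>s + \<psi>s) - D l \<theta>s = 0" for l
    proof -
      have c1: "(\<lambda>m. D l (T (r m) + P (r m)) - D l (T (r m))) \<longlonglongrightarrow> D l (\<theta>s + \<psi>s) - D l \<theta>s"
        by (intro tendsto_diff isCont_tendsto_compose[OF Dcont] tendsto_add Tc Pc)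
      have c2: "(\<lambda>m. D l (T (r m) + P (r m)) - D l (T (r m))) \<longlonglongrightarrow> 0"
      proof (rule Lim_null_comparison[OF _ inv0])
        show "\<forall>\<^sub>F m in sequentially. norm (D l (T (r m) + P (r m)) - D l (T (r m))) \<le> inverse (real (Suc m))"
        proof (rule eventually_sequentiallyI[of l])
          fix m assume "l \<le> m"
          from bnd[OF this] Pb[of "r m"] show "norm (D l (T (r m) + P (r m)) - D l (T (r m))) \<le> inverse (real (Suc m))"
            by simp (smt (verit, best) inverse_nonnegative_iff_nonnegative mult_le_cancel_right2 of_nat_0_le_iff)
        qed
      qed
      show ?thesis using LIMSEQ_unique[OF c1 c2] .
    qed
    have an: "real_analytic (\<lambda>t. v (t + \<psi>s) - v t)"
      by (intro analytic_diff analytic_shift analytic)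
    have per: "v (y + \<psi>s) - v y = 0" for y
      by (rule identity[OF an, of \<theta>s]) (use z in \<open>simp add: derivs_diff[OF analytic] D_def\<close>)
    show False
    proof (cases "\<psi>s > 0")
      case True
      then show False using minimal[of \<psi>s] per \<psi>s_rng by auto
    next
      case neg: False
      with \<open>\<psi>s \<noteq> 0\<close> have "\<psi>s < 0" by simp
      have "v (x + (\<psi>s + 1)) = v x" for x
        using periodic[of "x + \<psi>s"] per[of x] by (simp add: algebra_simps)
      then show False using minimal[of "\<psi>s + 1"] \<open>\<psi>s < 0\<close> \<psi>s_rng by auto
    qed
  next
    case True
    have z: "D (Suc l) \<theta>s = 0" for l
    proof -
      have "\<forall>m. \<exists>\<xi>. \<bar>\<xi> - T (r m)\<bar> \<le> \<bar>P (r m)\<bar> \<and>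
              D l (T (r m) + P (r m)) - D l (T (r m)) = P (r m) * D (Suc l) \<xi>"
        using mvt_sym[OF Dder] TP by blast
      then obtain \<xi> where \<xi>: "\<And>m. \<bar>\<xi> m - T (r m)\<bar> \<le> \<bar>P (r m)\<bar> \<and>
              D l (T (r m) + P (r m)) - D l (T (r m)) = P (r m) * D (Suc l) (\<xi> m)"
        by metis
      have "(\<lambda>m. \<xi> m - T (r m)) \<longlonglongrightarrow> 0"
      proof (rule Lim_null_comparison)
        show "\<forall>\<^sub>F m in sequentially. norm (\<xi> m - T (r m)) \<le> \<bar>P (r m)\<bar>" using \<xi> by simp
        show "(\<lambda>m. \<bar>P (r m)\<bar>) \<longlonglongrightarrow> 0" using tendsto_rabs[OF Pc] True by simp
      qed
      then have "(\<lambda>m. (\<xi> m - T (r m)) + T (r m)) \<longlonglongrightarrow> 0 + \<theta>s" by (intro tendsto_add Tc)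
      then have xc: "\<xi> \<longlonglongrightarrow> \<theta>s" by simp
      have c1: "(\<lambda>m. D (Suc l) (\<xi> m)) \<longlonglongrightarrow> D (Suc l) \<theta>s"
        by (rule isCont_tendsto_compose[OF Dcont xc])
      have c2: "(\<lambda>m. D (Suc l) (\<xi> m)) \<longlonglongrightarrow> 0"
      proof (rule Lim_null_comparison[OF _ inv0])
        show "\<forall>\<^sub>F m in sequentially. norm (D (Suc l) (\<xi> m)) \<le> inverse (real (Suc m))"
        proof (rule eventually_sequentiallyI[of l])
          fix m assume "l \<le> m"
          have Pn: "P (r m) \<noteq> 0" using TP by blast
          have "\<bar>P (r m)\<bar> * \<bar>D (Suc l) (\<xi> m)\<bar> \<le> \<bar>P (r m)\<bar> * inverse (real (Suc m))"
            using bnd[OF \<open>l \<le> m\<close>] \<xi>[of m] by (simp add: abs_mult)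
          then show "norm (D (Suc l) (\<xi> m)) \<le> inverse (real (Suc m))"
            using Pn by simp
        qed
      qed
      show ?thesis using LIMSEQ_unique[OF c1 c2] .
    qed
    have dz: "deriv v y = 0" for y
    proof (rule identity[OF analytic_deriv[OF analytic], of \<theta>s])
      fix k
      have "(deriv ^^ k) (deriv v) = (deriv ^^ Suc k) v" by (simp add: funpow_Suc_right del: funpow.simps)
      then show "(deriv ^^ k) (deriv v) \<theta>s = 0" using z[of k] by (simp add: D_def)
    qed
    have "\<forall>x. DERIV v x :> 0" using analytic_DERIV[OF analytic] dz by metis
    then have "v x = v 0" for x by (rule DERIV_isconst_all)
    then show False using nonconst by blast
  qed
qed

end
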